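(* Let $(\mathcal{F},w,s)$ be a balanced system on $n$ elements, with $\mathcal{F}=(F_1,\dots,F_m)$, and let $G=(V,E)$ be a directed graph. Let $f$ be the partitioning produced by the BISP algorithm with this system: (i) for every vertex $v$ choose $l(v)\in[m]$ independently with $\mathbb{P}(l(v)=i)=w_i$; (ii) for every edge $(v,u)\in E$ choose $f(v,u)\in[n]$ independently with $\mathbb{P}(f(v,u)=p)=s_{l(v)l(u)p}$. Suppose $|V|\to\infty$, $|E|/|V|\to\infty$ and $n=o\big((|E|/|V|)^{1/2}\big)$. Then for every $\varepsilon>0$, $\mathbb{P}(\mathrm{ib}(f)\le 1+\varepsilon)\to1$.
   Context: A system on $n$ elements is a triple $(\mathcal{F},w,s)$ where $\mathcal{F}=(F_1,\dots,F_m)$ is a collection of subsets of $[n]$, $w\in[0,1]^m$ with $\sum_i w_i=1$, and $s\in[0,1]^{m\times m\times n}$ with $\sum_p s_{ijp}=1$ for all $i,j$. It is balanced if for all $p\in[n]$, $\sum_{i=1}^m\sum_{j=1}^m w_iw_js_{ijp}=1/n$. A graph partitioning of $G=(V,E)$ into the $n$ partitions $[n]$ is a function $f:E\to[n]$; its imbalance is $\mathrm{ib}(f)=\dfrac{\max_{l\in[n]}|\{e\in E: f(e)=l\}|}{|E|/n}$. *)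

theory Defs
  imports "HOL-Analysis.Analysis" "HOL-Library.Landau_Symbols"
begin

text \<open>A system on n elements, 0-indexed: elements {..<n}, sets F 0 .. F (m-1),
  weights w i (i < m), distributions s i j p (i, j < m, p < n).\<close>
definition is_system :: "nat \<Rightarrow> nat \<Rightarrow> (nat \<Rightarrow> nat set) \<Rightarrow> (nat \<Rightarrow> real)
    \<Rightarrow> (nat \<Rightarrow> nat \<Rightarrow> nat \<Rightarrow> real) \<Rightarrow> bool" where
  "is_system n m F w s \<longleftrightarrow>
     (\<forall>i<m. F i \<subseteq> {..<n}) \<and>
     (\<forall>i<m. 0 \<le> w i \<and> w i \<le> 1) \<and> (\<Sum>i<m. w i) = 1 \<and>
     (\<forall>i<m. \<forall>j<m. \<forall>p<n. 0 \<le> s i j p \<and> s i j p \<le> 1) \<and>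
     (\<forall>i<m. \<forall>j<m. (\<Sum>p<n. s i j p) = 1)"

definition is_balanced :: "nat \<Rightarrow> nat \<Rightarrow> (nat \<Rightarrow> real)
    \<Rightarrow> (nat \<Rightarrow> nat \<Rightarrow> nat \<Rightarrow> real) \<Rightarrow> bool" where
  "is_balanced n m w s \<longleftrightarrow>
     (\<forall>p<n. (\<Sum>i<m. \<Sum>j<m. w i * w j * s i j p) = 1 / real n)"

definition imbalance :: "nat \<Rightarrow> ('v \<times> 'v) set \<Rightarrow> ('v \<times> 'v \<Rightarrow> nat) \<Rightarrow> real" where
  "imbalance n E f =
     real (Max ((\<lambda>l. card {e\<in>E. f e = l}) ` {..<n})) / (real (card E) / real n)"

text \<open>Probability that the partitioning produced by BISP (labels l(v) chosen independently
  with P(l v = i) = w i; then f(v,u) chosen independently with P(f(v,u) = p) = s (l v) (l u) p)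
  satisfies the predicate P. Written as the explicit finite sum over all outcomes.\<close>
definition bisp_prob :: "nat \<Rightarrow> nat \<Rightarrow> (nat \<Rightarrow> real) \<Rightarrow> (nat \<Rightarrow> nat \<Rightarrow> nat \<Rightarrow> real)
    \<Rightarrow> 'v set \<Rightarrow> ('v \<times> 'v) set \<Rightarrow> (('v \<times> 'v \<Rightarrow> nat) \<Rightarrow> bool) \<Rightarrow> real" where
  "bisp_prob n m w s V E P =
     (\<Sum>l\<in>PiE V (\<lambda>_. {..<m}). \<Sum>f\<in>PiE E (\<lambda>_. {..<n}).
        (if P f then 1 else 0) * (\<Prod>v\<in>V. w (l v)) *
        (\<Prod>e\<in>E. s (l (fst e)) (l (snd e)) (f e)))"

end

theory Submission
  imports Defs
begin


lemma peel:
  fixes g :: "'a \<Rightarrow> 'b \<Rightarrow> real"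
  assumes "finite A" "a \<notin> A"
  shows "(\<Sum>f\<in>PiE (insert a A) (\<lambda>_. B). (\<Prod>x\<in>insert a A. g x (f x)) * H f)
       = (\<Sum>y\<in>B. g a y * (\<Sum>f\<in>PiE A (\<lambda>_. B). (\<Prod>x\<in>A. g x (f x)) * H (f(a:=y))))"
proof -
  have "(\<Sum>f\<in>PiE (insert a A) (\<lambda>_. B). (\<Prod>x\<in>insert a A. g x (f x)) * H f)
     = (\<Sum>(y,f)\<in>B \<times> PiE A (\<lambda>_. B). (\<Prod>x\<in>insert a A. g x ((f(a:=y)) x)) * H (f(a:=y)))"
    unfolding PiE_insert_eq
    by (subst sum.reindex) (auto intro!: inj_combinator assms simp: case_prod_beta)
  also have "\<dots> = (\<Sum>(y,f)\<in>B \<times> PiE A (\<lambda>_. B). g a y * ((\<Prod>x\<in>A. g x (f x)) * H (f(a:=y))))"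
  proof (rule sum.cong[OF refl], clarify)
    fix y f assume "f \<in> PiE A (\<lambda>_. B)"
    have "(\<Prod>x\<in>A. g x ((f(a:=y)) x)) = (\<Prod>x\<in>A. g x (f x))"
      using assms by (intro prod.cong) auto
    then show "(\<Prod>x\<in>insert a A. g x ((f(a:=y)) x)) * H (f(a:=y)) = g a y * ((\<Prod>x\<in>A. g x (f x)) * H (f(a:=y)))"
      using assms by simp
  qed
  also have "\<dots> = (\<Sum>y\<in>B. g a y * (\<Sum>f\<in>PiE A (\<lambda>_. B). (\<Prod>x\<in>A. g x (f x)) * H (f(a:=y))))"
    by (simp add: sum.cartesian_product[symmetric] sum_distrib_left)
  finally show ?thesis .
qed

lemma tot_const:
  fixes g :: "'a \<Rightarrow> 'b \<Rightarrow> real"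
  assumes "finite A" "finite B" "\<And>x. x \<in> A \<Longrightarrow> (\<Sum>y\<in>B. g x y) = 1"
  shows "(\<Sum>f\<in>PiE A (\<lambda>_. B). (\<Prod>x\<in>A. g x (f x)) * c) = c"
proof -
  have "(\<Sum>f\<in>PiE A (\<lambda>_. B). (\<Prod>x\<in>A. g x (f x))) = (\<Prod>x\<in>A. \<Sum>y\<in>B. g x y)"
    using assms by (intro prod_sum_PiE[symmetric]) auto
  also have "\<dots> = 1" using assms by simp
  finally show ?thesis by (simp add: sum_distrib_right[symmetric])
qed

lemma two_pt:
  fixes g :: "'a \<Rightarrow> 'b \<Rightarrow> real"
  assumes "finite A" "finite B" "\<And>x. x \<in> A \<Longrightarrow> (\<Sum>y\<in>B. g x y) = 1"
    and "a \<in> A" "b \<in> A" "a \<noteq> b"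
  shows "(\<Sum>f\<in>PiE A (\<lambda>_. B). (\<Prod>x\<in>A. g x (f x)) * h (f a) (f b))
       = (\<Sum>y1\<in>B. \<Sum>y2\<in>B. g a y1 * g b y2 * h y1 y2)"
proof -
  define A' where "A' = A - {a, b}"
  have AA: "A = insert a (insert b A')" using assms unfolding A'_def by auto
  have fA': "finite A'" "a \<notin> insert b A'" "b \<notin> A'" "finite (insert b A')"
    using assms unfolding A'_def by auto
  have "(\<Sum>f\<in>PiE A (\<lambda>_. B). (\<Prod>x\<in>A. g x (f x)) * h (f a) (f b))
    = (\<Sum>y1\<in>B. g a y1 * (\<Sum>f\<in>PiE (insert b A') (\<lambda>_. B). (\<Prod>x\<in>insert b A'. g x (f x)) * h y1 (f b)))"
    unfolding AA using fA' assms(6) by (subst peel) auto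
  also have "\<dots> = (\<Sum>y1\<in>B. g a y1 * (\<Sum>y2\<in>B. g b y2 * (\<Sum>f\<in>PiE A' (\<lambda>_. B). (\<Prod>x\<in>A'. g x (f x)) * h y1 y2)))"
    using fA' by (subst peel) auto
  also have "\<dots> = (\<Sum>y1\<in>B. g a y1 * (\<Sum>y2\<in>B. g b y2 * h y1 y2))"
    using fA' assms by (subst tot_const) (auto simp: A'_def)
  also have "\<dots> = (\<Sum>y1\<in>B. \<Sum>y2\<in>B. g a y1 * g b y2 * h y1 y2)"
    by (simp add: sum_distrib_left mult.assoc)
  finally show ?thesis .
qed

lemma four_pt:
  fixes g :: "'a \<Rightarrow> 'b \<Rightarrow> real"
  assumes "finite A" "finite B" "\<And>x. x \<in> A \<Longrightarrow> (\<Sum>y\<in>B. g x y) = 1"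
    and "a \<in> A" "b \<in> A" "c \<in> A" "d \<in> A" "distinct [a,b,c,d]"
  shows "(\<Sum>f\<in>PiE A (\<lambda>_. B). (\<Prod>x\<in>A. g x (f x)) * h (f a) (f b) (f c) (f d))
       = (\<Sum>y1\<in>B. \<Sum>y2\<in>B. \<Sum>y3\<in>B. \<Sum>y4\<in>B. g a y1 * g b y2 * g c y3 * g d y4 * h y1 y2 y3 y4)"
proof -
  define A' where "A' = A - {a, b, c, d}"
  have AA: "A = insert a (insert b (insert c (insert d A')))" using assms unfolding A'_def by auto
  have fA': "finite A'" "a \<notin> insert b (insert c (insert d A'))" "b \<notin> insert c (insert d A')"
     "c \<notin> insert d A'" "d \<notin> A'"
    using assms unfolding A'_def by auto
  have "(\<Sum>f\<in>PiE A (\<lambda>_. B). (\<Prod>x\<in>A. g x (f x)) * h (f a) (f b) (f c) (f d))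
    = (\<Sum>y1\<in>B. g a y1 * (\<Sum>f\<in>PiE (insert b (insert c (insert d A'))) (\<lambda>_. B). (\<Prod>x\<in>insert b (insert c (insert d A')). g x (f x)) * h y1 (f b) (f c) (f d)))"
    unfolding AA using fA' assms(8) by (subst peel) auto
  also have "\<dots> = (\<Sum>y1\<in>B. g a y1 * (\<Sum>y2\<in>B. g b y2 * (\<Sum>f\<in>PiE (insert c (insert d A')) (\<lambda>_. B). (\<Prod>x\<in>insert c (insert d A'). g x (f x)) * h y1 y2 (f c) (f d))))"
    using fA' assms(8) by (subst peel) auto
  also have "\<dots> = (\<Sum>y1\<in>B. g a y1 * (\<Sum>y2\<in>B. g b y2 * (\<Sum>y3\<in>B. g c y3 * (\<Sum>f\<in>PiE (insert d A') (\<lambda>_. B). (\<Prod>x\<in>insert d A'. g x (f x)) * h y1 y2 y3 (f d)))))"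
    using fA' assms(8) by (subst peel) auto
  also have "\<dots> = (\<Sum>y1\<in>B. g a y1 * (\<Sum>y2\<in>B. g b y2 * (\<Sum>y3\<in>B. g c y3 * (\<Sum>y4\<in>B. g d y4 * (\<Sum>f\<in>PiE A' (\<lambda>_. B). (\<Prod>x\<in>A'. g x (f x)) * h y1 y2 y3 y4)))))"
    using fA' assms(8) by (subst peel) auto
  also have "\<dots> = (\<Sum>y1\<in>B. g a y1 * (\<Sum>y2\<in>B. g b y2 * (\<Sum>y3\<in>B. g c y3 * (\<Sum>y4\<in>B. g d y4 * h y1 y2 y3 y4))))"
    using fA' assms by (subst tot_const) (auto simp: A'_def)
  also have "\<dots> = (\<Sum>y1\<in>B. \<Sum>y2\<in>B. \<Sum>y3\<in>B. \<Sum>y4\<in>B. g a y1 * g b y2 * g c y3 * g d y4 * h y1 y2 y3 y4)"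
    by (simp add: sum_distrib_left mult.assoc)
  finally show ?thesis .
qed

lemma alg4:
  fixes w :: "nat \<Rightarrow> real" and s :: "nat \<Rightarrow> nat \<Rightarrow> nat \<Rightarrow> real"
  shows "(\<Sum>y1<m. \<Sum>y2<m. \<Sum>y3<m. \<Sum>y4<m. w y1 * w y2 * w y3 * w y4 * (\<Sum>p<n. s y1 y2 p * s y3 y4 p))
    = (\<Sum>p<n. (\<Sum>i<m. \<Sum>j<m. w i * w j * s i j p) * (\<Sum>i<m. \<Sum>j<m. w i * w j * s i j p))"
proof -
  let ?T = "\<lambda>y1 y2 y3 y4 p. w y1 * w y2 * w y3 * w y4 * (s y1 y2 p * s y3 y4 p)"
  have per: "(\<Sum>i<m. \<Sum>j<m. w i * w j * s i j p) * (\<Sum>i<m. \<Sum>j<m. w i * w j * s i j p)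
      = (\<Sum>y1<m. \<Sum>y2<m. \<Sum>y3<m. \<Sum>y4<m. ?T y1 y2 y3 y4 p)" for p
  proof -
    have "(\<Sum>i<m. \<Sum>j<m. w i * w j * s i j p) * (\<Sum>i<m. \<Sum>j<m. w i * w j * s i j p)
      = (\<Sum>y1<m. \<Sum>y3<m. (\<Sum>y2<m. w y1 * w y2 * s y1 y2 p) * (\<Sum>y4<m. w y3 * w y4 * s y3 y4 p))"
      by (rule sum_product)
    also have "\<dots> = (\<Sum>y1<m. \<Sum>y3<m. \<Sum>y2<m. \<Sum>y4<m. (w y1 * w y2 * s y1 y2 p) * (w y3 * w y4 * s y3 y4 p))"
      by (simp only: sum_product)
    also have "\<dots> = (\<Sum>y1<m. \<Sum>y2<m. \<Sum>y3<m. \<Sum>y4<m. (w y1 * w y2 * s y1 y2 p) * (w y3 * w y4 * s y3 y4 p))"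
      by (rule sum.cong[OF refl], rule sum.swap)
    also have "\<dots> = (\<Sum>y1<m. \<Sum>y2<m. \<Sum>y3<m. \<Sum>y4<m. ?T y1 y2 y3 y4 p)"
      by (simp add: mult_ac)
    finally show ?thesis .
  qed
  have "(\<Sum>p<n. (\<Sum>i<m. \<Sum>j<m. w i * w j * s i j p) * (\<Sum>i<m. \<Sum>j<m. w i * w j * s i j p))
      = (\<Sum>p<n. \<Sum>y1<m. \<Sum>y2<m. \<Sum>y3<m. \<Sum>y4<m. ?T y1 y2 y3 y4 p)"
    by (simp only: per)
  also have "\<dots> = (\<Sum>y1<m. \<Sum>p<n. \<Sum>y2<m. \<Sum>y3<m. \<Sum>y4<m. ?T y1 y2 y3 y4 p)"
    by (rule sum.swap)
  also have "\<dots> = (\<Sum>y1<m. \<Sum>y2<m. \<Sum>p<n. \<Sum>y3<m. \<Sum>y4<m. ?T y1 y2 y3 y4 p)"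
    by (rule sum.cong[OF refl], rule sum.swap)
  also have "\<dots> = (\<Sum>y1<m. \<Sum>y2<m. \<Sum>y3<m. \<Sum>p<n. \<Sum>y4<m. ?T y1 y2 y3 y4 p)"
    by (rule sum.cong[OF refl], rule sum.cong[OF refl], rule sum.swap)
  also have "\<dots> = (\<Sum>y1<m. \<Sum>y2<m. \<Sum>y3<m. \<Sum>y4<m. \<Sum>p<n. ?T y1 y2 y3 y4 p)"
    by (rule sum.cong[OF refl], rule sum.cong[OF refl], rule sum.cong[OF refl], rule sum.swap)
  also have "\<dots> = (\<Sum>y1<m. \<Sum>y2<m. \<Sum>y3<m. \<Sum>y4<m. w y1 * w y2 * w y3 * w y4 * (\<Sum>p<n. s y1 y2 p * s y3 y4 p))"
    by (simp add: sum_distrib_left)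
  finally show ?thesis by simp
qed

lemma sum_ind: "(x::nat) < n \<Longrightarrow> (\<Sum>p<n. of_bool (x = p) * (g p::real)) = g x"
proof -
  assume "x < n"
  have "(\<Sum>p<n. of_bool (x = p) * (g p::real)) = (\<Sum>p<n. if p = x then g p else 0)"
    by (rule sum.cong) auto
  then show ?thesis using \<open>x < n\<close> by simp
qed

definition EXb :: "nat \<Rightarrow> nat \<Rightarrow> (nat \<Rightarrow> real) \<Rightarrow> (nat \<Rightarrow> nat \<Rightarrow> nat \<Rightarrow> real)
    \<Rightarrow> 'v set \<Rightarrow> ('v \<times> 'v) set \<Rightarrow> (('v \<Rightarrow> nat) \<Rightarrow> ('v \<times> 'v \<Rightarrow> nat) \<Rightarrow> real) \<Rightarrow> real" where
  "EXb n m w s V E h = (\<Sum>l\<in>PiE V (\<lambda>_. {..<m}). \<Sum>f\<in>PiE E (\<lambda>_. {..<n}).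
        h l f * (\<Prod>v\<in>V. w (l v)) * (\<Prod>e\<in>E. s (l (fst e)) (l (snd e)) (f e)))"

lemma bisp_EXb: "bisp_prob n m w s V E P = EXb n m w s V E (\<lambda>l f. if P f then 1 else 0)"
  unfolding bisp_prob_def EXb_def by simp

context
  fixes n m :: nat and F :: "nat \<Rightarrow> nat set" and w :: "nat \<Rightarrow> real"
    and s :: "nat \<Rightarrow> nat \<Rightarrow> nat \<Rightarrow> real" and V :: "'v set" and E :: "('v \<times> 'v) set"
  assumes sys: "is_system n m F w s" and bal: "is_balanced n m w s"
    and finV: "finite V" and EV: "E \<subseteq> V \<times> V"
begin

abbreviation "EXP \<equiv> EXb n m w s V E"
abbreviation "LL \<equiv> PiE V (\<lambda>_. {..<m})"
abbreviation "FF \<equiv> PiE E (\<lambda>_. {..<n})"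

lemma finE: "finite E"
  using EV finV by (meson finite_SigmaI finite_subset)

lemma m_pos: "m > 0"
  using sys unfolding is_system_def by (cases m) auto

lemma n_pos: "n > 0"
proof (rule ccontr)
  assume "\<not> n > 0"
  then have "n = 0" by simp
  with sys m_pos show False unfolding is_system_def by auto
qed

lemma w_nonneg: "i < m \<Longrightarrow> 0 \<le> w i"
  using sys unfolding is_system_def by auto

lemma s_nonneg: "i < m \<Longrightarrow> j < m \<Longrightarrow> p < n \<Longrightarrow> 0 \<le> s i j p"
  using sys unfolding is_system_def by auto

lemma s_le1: "i < m \<Longrightarrow> j < m \<Longrightarrow> p < n \<Longrightarrow> s i j p \<le> 1"
  using sys unfolding is_system_def by auto

lemma s_sum: "i < m \<Longrightarrow> j < m \<Longrightarrow> (\<Sum>p<n. s i j p) = 1"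
  using sys unfolding is_system_def by auto

lemma w_sum: "(\<Sum>i<m. w i) = 1"
  using sys unfolding is_system_def by auto

lemma lE: "l \<in> LL \<Longrightarrow> e \<in> E \<Longrightarrow> l (fst e) < m \<and> l (snd e) < m"
  using EV by (auto simp: PiE_def Pi_def)

lemma W_nonneg: "l \<in> LL \<Longrightarrow> 0 \<le> (\<Prod>v\<in>V. w (l v))"
  by (intro prod_nonneg) (auto intro!: w_nonneg simp: PiE_def Pi_def)

lemma S_nonneg:
  assumes "l \<in> LL" "f \<in> FF" shows "0 \<le> (\<Prod>e\<in>E. s (l (fst e)) (l (snd e)) (f e))"
proof (intro prod_nonneg)
  fix e assume "e \<in> E"
  then show "0 \<le> s (l (fst e)) (l (snd e)) (f e)"
    using lE[of l e] assms PiE_mem[OF assms(2) \<open>e \<in> E\<close>] by (intro s_nonneg) auto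
qed

lemma S_sum_c: "l \<in> LL \<Longrightarrow> (\<Sum>f\<in>FF. (\<Prod>e\<in>E. s (l (fst e)) (l (snd e)) (f e)) * c) = c"
  by (rule tot_const) (auto simp: finE intro!: s_sum dest: lE)

lemma W_sum_c: "(\<Sum>l\<in>LL. (\<Prod>v\<in>V. w (l v)) * c) = c"
  by (rule tot_const) (auto simp: finV w_sum)

lemma EXP_alt: "EXP h = (\<Sum>l\<in>LL. (\<Prod>v\<in>V. w (l v)) * (\<Sum>f\<in>FF. (\<Prod>e\<in>E. s (l (fst e)) (l (snd e)) (f e)) * h l f))"
  unfolding EXb_def by (simp add: sum_distrib_left mult_ac)

lemma EXP_const: "EXP (\<lambda>l f. c) = c"
proof -
  have "EXP (\<lambda>l f. c) = (\<Sum>l\<in>LL. (\<Prod>v\<in>V. w (l v)) * c)"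
    unfolding EXP_alt by (rule sum.cong[OF refl]) (simp add: S_sum_c)
  then show ?thesis by (simp add: W_sum_c)
qed

lemma EXP_add: "EXP (\<lambda>l f. h1 l f + h2 l f) = EXP h1 + EXP h2"
  unfolding EXb_def by (simp add: distrib_right sum.distrib)

lemma EXP_diff: "EXP (\<lambda>l f. h1 l f - h2 l f) = EXP h1 - EXP h2"
  unfolding EXb_def by (simp add: left_diff_distrib sum_subtractf)

lemma EXP_scale: "EXP (\<lambda>l f. c * h l f) = c * EXP h"
  unfolding EXb_def by (simp add: sum_distrib_left mult_ac)

lemma EXP_sum: "finite I \<Longrightarrow> EXP (\<lambda>l f. \<Sum>i\<in>I. h i l f) = (\<Sum>i\<in>I. EXP (h i))"
proof -
  assume fI: "finite I"
  have "EXP (\<lambda>l f. \<Sum>i\<in>I. h i l f) = (\<Sum>l\<in>LL. \<Sum>f\<in>FF. \<Sum>i\<in>I. h i l f * (\<Prod>v\<in>V. w (l v)) * (\<Prod>e\<in>E. s (l (fst e)) (l (snd e)) (f e)))"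
    unfolding EXb_def by (simp add: sum_distrib_right)
  also have "\<dots> = (\<Sum>l\<in>LL. \<Sum>i\<in>I. \<Sum>f\<in>FF. h i l f * (\<Prod>v\<in>V. w (l v)) * (\<Prod>e\<in>E. s (l (fst e)) (l (snd e)) (f e)))"
    by (rule sum.cong[OF refl], rule sum.swap)
  also have "\<dots> = (\<Sum>i\<in>I. \<Sum>l\<in>LL. \<Sum>f\<in>FF. h i l f * (\<Prod>v\<in>V. w (l v)) * (\<Prod>e\<in>E. s (l (fst e)) (l (snd e)) (f e)))"
    by (rule sum.swap)
  finally show ?thesis unfolding EXb_def .
qed

lemma EXP_mono:
  assumes "\<And>l f. l \<in> LL \<Longrightarrow> f \<in> FF \<Longrightarrow> h1 l f \<le> h2 l f"
  shows "EXP h1 \<le> EXP h2"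
  unfolding EXb_def
  by (intro sum_mono mult_right_mono assms mult_nonneg_nonneg W_nonneg S_nonneg) auto

lemma pair_good:
  assumes e: "e \<in> E" "e' \<in> E" and dist: "distinct [fst e, snd e, fst e', snd e']"
  shows "EXP (\<lambda>l f. of_bool (f e = f e')) = 1 / real n"
proof -
  have ne: "e \<noteq> e'" using dist by auto
  have inner: "(\<Sum>f\<in>FF. (\<Prod>x\<in>E. s (l (fst x)) (l (snd x)) (f x)) * of_bool (f e = f e'))
      = (\<Sum>p<n. s (l (fst e)) (l (snd e)) p * s (l (fst e')) (l (snd e')) p)" if l: "l \<in> LL" for l
  proof -
    have "(\<Sum>f\<in>FF. (\<Prod>x\<in>E. s (l (fst x)) (l (snd x)) (f x)) * of_bool (f e = f e'))
      = (\<Sum>y1<n. \<Sum>y2<n. s (l (fst e)) (l (snd e)) y1 * s (l (fst e')) (l (snd e')) y2 * of_bool (y1 = y2))"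
      using two_pt[of E "{..<n}" "\<lambda>x y. s (l (fst x)) (l (snd x)) y" e e' "\<lambda>y1 y2. of_bool (y1 = y2)"]
        e ne finE l lE s_sum by auto
    also have "\<dots> = (\<Sum>p<n. s (l (fst e)) (l (snd e)) p * s (l (fst e')) (l (snd e')) p)"
      by (rule sum.cong[OF refl]) (simp add: of_bool_def if_distrib sum.delta cong: if_cong)
    finally show ?thesis .
  qed
  have "EXP (\<lambda>l f. of_bool (f e = f e'))
     = (\<Sum>l\<in>LL. (\<Prod>v\<in>V. w (l v)) * (\<Sum>p<n. s (l (fst e)) (l (snd e)) p * s (l (fst e')) (l (snd e')) p))"
    unfolding EXP_alt by (rule sum.cong[OF refl]) (simp add: inner)
  also have "\<dots> = (\<Sum>y1<m. \<Sum>y2<m. \<Sum>y3<m. \<Sum>y4<m. w y1 * w y2 * w y3 * w y4 * (\<Sum>p<n. s y1 y2 p * s y3 y4 p))"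
  proof (rule four_pt[of V "{..<m}" "\<lambda>x y. w y" "fst e" "snd e" "fst e'" "snd e'" "\<lambda>y1 y2 y3 y4. \<Sum>p<n. s y1 y2 p * s y3 y4 p"])
    show "finite V" "finite {..<m}" by (auto simp: finV)
    show "\<And>x. x \<in> V \<Longrightarrow> (\<Sum>y<m. w y) = 1" by (simp add: w_sum)
    show "fst e \<in> V" "snd e \<in> V" "fst e' \<in> V" "snd e' \<in> V" using e EV by auto
    show "distinct [fst e, snd e, fst e', snd e']" by (rule dist)
  qed
  also have "\<dots> = (\<Sum>p<n. (\<Sum>i<m. \<Sum>j<m. w i * w j * s i j p) * (\<Sum>i<m. \<Sum>j<m. w i * w j * s i j p))"
    by (rule alg4)
  also have "\<dots> = (\<Sum>p<n. (1 / real n) * (1 / real n))"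
    using bal unfolding is_balanced_def by simp
  also have "\<dots> = 1 / real n" using n_pos by (simp add: power2_eq_square)
  finally show ?thesis .
qed

lemma EXP_cong:
  assumes "\<And>l f. l \<in> LL \<Longrightarrow> f \<in> FF \<Longrightarrow> h1 l f = h2 l f"
  shows "EXP h1 = EXP h2"
  using EXP_mono[of h1 h2] EXP_mono[of h2 h1] assms by force

lemma pair_le1: "EXP (\<lambda>l f. of_bool (f e = f e')) \<le> 1"
  using EXP_mono[of "\<lambda>l f. of_bool (f e = f e')" "\<lambda>l f. 1"] EXP_const[of 1] by simp

definition ind :: "'v \<times> 'v \<Rightarrow> 'v \<times> 'v \<Rightarrow> real" where
  "ind e e' = of_bool (\<not> distinct [fst e, snd e, fst e', snd e'])"

lemma pair_bound:
  assumes "e \<in> E" "e' \<in> E"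
  shows "EXP (\<lambda>l f. of_bool (f e = f e')) \<le> 1 / real n + ind e e'"
proof (cases "distinct [fst e, snd e, fst e', snd e']")
  case True
  then show ?thesis using pair_good[OF assms True] by (simp add: ind_def)
next
  case False
  have "0 \<le> 1 / real n" by simp
  moreover have "ind e e' = 1" using False by (simp add: ind_def)
  ultimately show ?thesis using pair_le1[of e e'] by linarith
qed

lemma card_fst: "card (E \<inter> {e. fst e = a}) \<le> card V"
proof (rule card_inj_on_le[of snd])
  show "inj_on snd (E \<inter> {e. fst e = a})" by (auto simp: inj_on_def prod_eq_iff)
  show "snd ` (E \<inter> {e. fst e = a}) \<subseteq> V" using EV by auto
qed (rule finV)

lemma card_snd: "card (E \<inter> {e. snd e = a}) \<le> card V"
proof (rule card_inj_on_le[of fst])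
  show "inj_on fst (E \<inter> {e. snd e = a})" by (auto simp: inj_on_def prod_eq_iff)
  show "fst ` (E \<inter> {e. snd e = a}) \<subseteq> V" using EV by auto
qed (rule finV)

lemma card_loop: "card (E \<inter> {e. fst e = snd e}) \<le> card V"
proof (rule card_inj_on_le[of fst])
  show "inj_on fst (E \<inter> {e. fst e = snd e})" by (auto simp: inj_on_def prod_eq_iff)
  show "fst ` (E \<inter> {e. fst e = snd e}) \<subseteq> V" using EV by auto
qed (rule finV)

lemma ind_count: "(\<Sum>e\<in>E. \<Sum>e'\<in>E. ind e e') \<le> 6 * real (card V) * real (card E)"
proof -
  have row: "(\<Sum>e'\<in>E. ind e e') \<le> real (card E) * of_bool (fst e = snd e) + 5 * real (card V)" for e
  proof -
    have "(\<Sum>e'\<in>E. ind e e') \<le> (\<Sum>e'\<in>E. of_bool (fst e = snd e) + of_bool (fst e' = fst e)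
        + of_bool (snd e' = fst e) + of_bool (fst e' = snd e) + of_bool (snd e' = snd e)
        + of_bool (fst e' = snd e'))"
      by (intro sum_mono) (auto simp: ind_def)
    also have "\<dots> = real (card E) * of_bool (fst e = snd e) + real (card (E \<inter> {e'. fst e' = fst e}))
        + real (card (E \<inter> {e'. snd e' = fst e})) + real (card (E \<inter> {e'. fst e' = snd e}))
        + real (card (E \<inter> {e'. snd e' = snd e})) + real (card (E \<inter> {e'. fst e' = snd e'}))"
      by (simp add: sum.distrib finE)
    also have "\<dots> \<le> real (card E) * of_bool (fst e = snd e) + 5 * real (card V)"
      using card_fst[of "fst e"] card_snd[of "fst e"] card_fst[of "snd e"] card_snd[of "snd e"] card_loop
      by linarith
    finally show ?thesis .
  qed
  have "(\<Sum>e\<in>E. \<Sum>e'\<in>E. ind e e') \<le> (\<Sum>e\<in>E. real (card E) * of_bool (fst e = snd e) + 5 * real (card V))"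
    by (intro sum_mono row)
  also have "\<dots> = real (card E) * real (card (E \<inter> {e. fst e = snd e})) + 5 * real (card V) * real (card E)"
    by (simp add: sum.distrib finE sum_distrib_left[symmetric])
  also have "\<dots> \<le> real (card E) * real (card V) + 5 * real (card V) * real (card E)"
    using card_loop by (intro add_right_mono mult_left_mono) auto
  finally show ?thesis by (simp add: algebra_simps)
qed

lemma Q_ident:
  assumes f: "f \<in> FF"
  shows "(\<Sum>p<n. (real (card {e\<in>E. f e = p}) - real (card E) / real n)^2)
       = (\<Sum>e\<in>E. \<Sum>e'\<in>E. of_bool (f e = f e')) - real (card E)^2 / real n"
proof -
  define X where "X p = (\<Sum>e\<in>E. of_bool (f e = p) :: real)" for p
  have fe: "e \<in> E \<Longrightarrow> f e < n" for e using PiE_mem[OF f, of e] by simp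
  have Xc: "real (card {e\<in>E. f e = p}) = X p" for p
    unfolding X_def using finE by (simp add: Int_def conj_commute)
  have sumX: "(\<Sum>p<n. X p) = real (card E)"
  proof -
    have "(\<Sum>p<n. X p) = (\<Sum>e\<in>E. \<Sum>p<n. of_bool (f e = p) * 1)"
      unfolding X_def by (simp only: mult_1_right, rule sum.swap)
    also have "\<dots> = (\<Sum>e\<in>E. 1)" by (rule sum.cong[OF refl]) (rule sum_ind[OF fe])
    finally show ?thesis by simp
  qed
  have sumX2: "(\<Sum>p<n. (X p)^2) = (\<Sum>e\<in>E. \<Sum>e'\<in>E. of_bool (f e = f e'))"
  proof -
    have "(\<Sum>p<n. (X p)^2) = (\<Sum>p<n. \<Sum>e\<in>E. \<Sum>e'\<in>E. of_bool (f e = p) * of_bool (f e' = p))"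
      unfolding X_def power2_eq_square by (simp add: sum_product)
    also have "\<dots> = (\<Sum>e\<in>E. \<Sum>p<n. \<Sum>e'\<in>E. of_bool (f e = p) * of_bool (f e' = p))"
      by (rule sum.swap)
    also have "\<dots> = (\<Sum>e\<in>E. \<Sum>e'\<in>E. \<Sum>p<n. of_bool (f e = p) * of_bool (f e' = p))"
      by (rule sum.cong[OF refl], rule sum.swap)
    also have "\<dots> = (\<Sum>e\<in>E. \<Sum>e'\<in>E. of_bool (f e' = f e))"
      by (intro sum.cong refl sum_ind fe)
    finally show ?thesis by (simp add: eq_commute)
  qed
  have "(\<Sum>p<n. (X p - real (card E) / real n)^2)
      = (\<Sum>p<n. (X p)^2) - 2 * (real (card E) / real n) * (\<Sum>p<n. X p) + real n * (real (card E) / real n)^2"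
    by (simp add: power2_diff sum_subtractf sum.distrib sum_distrib_left sum_divide_distrib[symmetric] mult_ac)
  also have "\<dots> = (\<Sum>e\<in>E. \<Sum>e'\<in>E. of_bool (f e = f e')) - real (card E)^2 / real n"
    unfolding sumX sumX2 using n_pos by (simp add: power2_eq_square field_simps)
  finally show ?thesis by (simp add: Xc)
qed

lemma bad_sq:
  assumes f: "f \<in> FF" and cE: "card E > 0" and eps: "\<epsilon> > 0"
    and nb: "\<not> imbalance n E f \<le> 1 + \<epsilon>"
  shows "(\<epsilon> * (real (card E) / real n))^2
      \<le> (\<Sum>p<n. (real (card {e\<in>E. f e = p}) - real (card E) / real n)^2)"
proof -
  define c where "c = real (card E) / real n"
  have cpos: "c > 0" using cE n_pos by (simp add: c_def)
  define M where "M = Max ((\<lambda>l. card {e\<in>E. f e = l}) ` {..<n})"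
  have "M \<in> (\<lambda>l. card {e\<in>E. f e = l}) ` {..<n}"
    unfolding M_def using n_pos by (intro Max_in) auto
  then obtain p where p: "p < n" "M = card {e\<in>E. f e = p}" by auto
  have "\<not> real M / c \<le> 1 + \<epsilon>" using nb unfolding imbalance_def M_def c_def by simp
  then have "real M > (1 + \<epsilon>) * c" using cpos by (simp add: pos_divide_le_eq not_le)
  then have gt: "real (card {e\<in>E. f e = p}) - c \<ge> \<epsilon> * c" using p by (simp add: algebra_simps)
  have "(\<epsilon> * c)^2 \<le> (real (card {e\<in>E. f e = p}) - c)^2"
    using gt eps cpos by (intro power_mono) auto
  also have "\<dots> \<le> (\<Sum>p<n. (real (card {e\<in>E. f e = p}) - c)^2)"
    using p by (intro member_le_sum) auto
  finally show ?thesis by (simp add: c_def)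
qed

lemma final_bound:
  assumes cE: "card E > 0" and eps: "\<epsilon> > 0"
  shows "\<bar>bisp_prob n m w s V E (\<lambda>f. imbalance n E f \<le> 1 + \<epsilon>) - 1\<bar>
     \<le> 6 * real (card V) * (real n)^2 / (\<epsilon>^2 * real (card E))"
proof -
  define G where "G f = (imbalance n E f \<le> 1 + \<epsilon>)" for f
  define B where "B = EXP (\<lambda>l f. of_bool (\<not> G f))"
  define c where "c = real (card E) / real n"
  have cpos: "c > 0" using cE n_pos by (simp add: c_def)
  have "bisp_prob n m w s V E (\<lambda>f. imbalance n E f \<le> 1 + \<epsilon>) = EXP (\<lambda>l f. 1 - of_bool (\<not> G f))"
    unfolding bisp_EXb G_def by (rule EXP_cong) simp
  also have "\<dots> = 1 - B" unfolding B_def by (simp add: EXP_diff EXP_const)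
  finally have bp: "bisp_prob n m w s V E (\<lambda>f. imbalance n E f \<le> 1 + \<epsilon>) = 1 - B" .
  have B0: "B \<ge> 0"
    using EXP_mono[of "\<lambda>l f. 0" "\<lambda>l f. of_bool (\<not> G f)"] EXP_const[of 0] unfolding B_def by simp
  let ?Q = "\<lambda>f. (\<Sum>e\<in>E. \<Sum>e'\<in>E. of_bool (f e = f e')) - real (card E)^2 / real n"
  have "B * (\<epsilon> * c)^2 = (\<epsilon> * c)^2 * B" by simp
  also have "\<dots> = EXP (\<lambda>l f. (\<epsilon> * c)^2 * of_bool (\<not> G f))"
    unfolding B_def by (rule EXP_scale[symmetric])
  also have "\<dots> \<le> EXP (\<lambda>l f. ?Q f)"
  proof (rule EXP_mono)
    fix l f assume l: "l \<in> LL" and f: "f \<in> FF"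
    show "(\<epsilon> * c)^2 * of_bool (\<not> G f) \<le> ?Q f"
    proof (cases "G f")
      case True
      have "0 \<le> (\<Sum>p<n. (real (card {e\<in>E. f e = p}) - real (card E) / real n)^2)"
        by (intro sum_nonneg) auto
      then show ?thesis using True Q_ident[OF f] by simp
    next
      case False
      then show ?thesis using bad_sq[OF f cE eps] Q_ident[OF f] unfolding G_def c_def by simp
    qed
  qed
  also have "\<dots> = (\<Sum>e\<in>E. \<Sum>e'\<in>E. EXP (\<lambda>l f. of_bool (f e = f e'))) - real (card E)^2 / real n"
    by (simp add: EXP_diff EXP_sum finE EXP_const del: sum_of_bool_eq)
  also have "\<dots> \<le> (\<Sum>e\<in>E. \<Sum>e'\<in>E. 1 / real n + ind e e') - real (card E)^2 / real n"
    by (intro diff_right_mono sum_mono pair_bound) auto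
  also have "\<dots> = (\<Sum>e\<in>E. \<Sum>e'\<in>E. ind e e')"
    by (simp add: sum.distrib power2_eq_square)
  also have "\<dots> \<le> 6 * real (card V) * real (card E)" by (rule ind_count)
  finally have Bb: "B * (\<epsilon> * c)^2 \<le> 6 * real (card V) * real (card E)" .
  have "B \<le> 6 * real (card V) * real (card E) / (\<epsilon> * c)^2"
    using Bb cpos eps by (simp add: pos_le_divide_eq)
  also have "\<dots> = 6 * real (card V) * (real n)^2 / (\<epsilon>^2 * real (card E))"
    using cE n_pos unfolding c_def by (simp add: field_simps power2_eq_square)
  finally show ?thesis using bp B0 by simp
qed

end


lemma ratio_lim:
  fixes n :: "nat \<Rightarrow> nat" and D :: "nat \<Rightarrow> real"
  assumes dens: "filterlim D at_top sequentially"
    and nsmall: "(\<lambda>k. real (n k)) \<in> o(\<lambda>k. sqrt (D k))"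
  shows "(\<lambda>k. (real (n k))^2 / D k) \<longlonglongrightarrow> 0"
proof (rule order_tendstoI)
  fix a :: real assume "a < 0"
  have "eventually (\<lambda>k. D k > 0) sequentially"
    using dens filterlim_at_top_dense by blast
  then show "eventually (\<lambda>k. a < (real (n k))^2 / D k) sequentially"
  proof eventually_elim
    case (elim k)
    then have "0 \<le> (real (n k))^2 / D k" by simp
    then show ?case using \<open>a < 0\<close> by linarith
  qed
next
  fix a :: real assume a: "a > 0"
  have e1: "eventually (\<lambda>k. D k > 0) sequentially"
    using dens filterlim_at_top_dense by blast
  have e2: "eventually (\<lambda>k. norm (real (n k)) \<le> sqrt (a/2) * norm (sqrt (D k))) sequentially"
    using landau_o.smallD[OF nsmall, of "sqrt (a/2)"] a by simp
  show "eventually (\<lambda>k. (real (n k))^2 / D k < a) sequentially"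
    using e1 e2
  proof eventually_elim
    case (elim k)
    then have "real (n k) \<le> sqrt (a/2) * sqrt (D k)" by simp
    then have "(real (n k))^2 \<le> (sqrt (a/2) * sqrt (D k))^2"
      by (intro power_mono) auto
    also have "\<dots> = a/2 * D k" using a elim by (simp add: power_mult_distrib)
    finally have "(real (n k))^2 / D k \<le> a/2" using elim by (simp add: pos_divide_le_eq)
    then show ?case using a by linarith
  qed
qed


theorem lemma1:
  fixes n m :: "nat \<Rightarrow> nat"
    and F :: "nat \<Rightarrow> nat \<Rightarrow> nat set"
    and w :: "nat \<Rightarrow> nat \<Rightarrow> real"
    and s :: "nat \<Rightarrow> nat \<Rightarrow> nat \<Rightarrow> nat \<Rightarrow> real"
    and V :: "nat \<Rightarrow> 'v set"
    and E :: "nat \<Rightarrow> ('v \<times> 'v) set"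
  assumes sys: "\<And>k. is_system (n k) (m k) (F k) (w k) (s k)"
    and bal: "\<And>k. is_balanced (n k) (m k) (w k) (s k)"
    and finV: "\<And>k. finite (V k)"
    and EV: "\<And>k. E k \<subseteq> V k \<times> V k"
    and Vinf: "filterlim (\<lambda>k. real (card (V k))) at_top sequentially"
    and dens: "filterlim (\<lambda>k. real (card (E k)) / real (card (V k))) at_top sequentially"
    and nsmall: "(\<lambda>k. real (n k)) \<in> o(\<lambda>k. sqrt (real (card (E k)) / real (card (V k))))"
  shows "\<forall>\<epsilon>>0. (\<lambda>k. bisp_prob (n k) (m k) (w k) (s k) (V k) (E k)
                 (\<lambda>f. imbalance (n k) (E k) f \<le> 1 + \<epsilon>)) \<longlonglongrightarrow> 1"
proof (intro allI impI)
  fix \<epsilon> :: real assume eps: "\<epsilon> > 0"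
  let ?P = "\<lambda>k. bisp_prob (n k) (m k) (w k) (s k) (V k) (E k) (\<lambda>f. imbalance (n k) (E k) f \<le> 1 + \<epsilon>)"
  let ?D = "\<lambda>k. real (card (E k)) / real (card (V k))"
  have r: "(\<lambda>k. (real (n k))^2 / ?D k) \<longlonglongrightarrow> 0" by (rule ratio_lim[OF dens nsmall])
  have g: "(\<lambda>k. 6 / \<epsilon>^2 * ((real (n k))^2 / ?D k)) \<longlonglongrightarrow> 0"
    by (rule tendsto_mult_right_zero[OF r])
  have e1: "eventually (\<lambda>k. real (card (E k)) / real (card (V k)) > 0) sequentially"
    using dens[unfolded filterlim_at_top_dense] by blast
  have ev: "eventually (\<lambda>k. norm (?P k - 1) \<le> 6 / \<epsilon>^2 * ((real (n k))^2 / ?D k)) sequentially"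
    using e1
  proof eventually_elim
    case (elim k)
    have cE: "card (E k) > 0" and cV: "card (V k) > 0" using elim
      by (auto simp: zero_less_divide_iff)
    have "norm (?P k - 1) \<le> 6 * real (card (V k)) * (real (n k))^2 / (\<epsilon>^2 * real (card (E k)))"
      using final_bound[OF sys bal finV EV cE eps] by simp
    also have "\<dots> = 6 / \<epsilon>^2 * ((real (n k))^2 / ?D k)"
      using cE cV eps by (simp add: field_simps)
    finally show ?case .
  qed
  have "(\<lambda>k. ?P k - 1) \<longlonglongrightarrow> 0" by (rule Lim_null_comparison[OF ev g])
  then have "(\<lambda>k. ?P k - 1 + 1) \<longlonglongrightarrow> 0 + 1" by (intro tendsto_add) auto
  then show "?P \<longlonglongrightarrow> 1" by simp
qed

end
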